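(* Let $t$ and $u$ be $\lambda$-terms (terms without explicit substitutions). Then $t \equiv_{S} u$ if and only if $t \equiv_{V} u$, where $\equiv_S$ is the contextual equivalence induced by weak reduction $\to_{w}$ of the silly substitution calculus and $\equiv_V$ is the contextual equivalence induced by call-by-value reduction $\to_{\beta_v}$.
   Context: Silly substitution calculus (SSC). Terms: $t,u,s ::= x \mid \lambda x.t \mid t\,u \mid t[x\backslash u]$, where $t[x\backslash u]$ is an explicit substitution (ES) binding $x$ in $t$; $\lambda x.t$ also binds $x$ in $t$; terms are taken up to $\alpha$-renaming; $\mathrm{fv}(t[x\backslash u]) = (\mathrm{fv}(t)\setminus\{x\})\cup \mathrm{fv}(u)$. Values are abstractions only: $v ::= \lambda x.t$. Substitution contexts: $S ::= \langle\cdot\rangle \mid S[x\backslash u]$. Weak contexts: $W ::= \langle\cdot\rangle \mid W\,t \mid t\,W \mid t[x\backslash W] \mid W[x\backslash u]$ (the hole is never under an abstraction). $W\langle t\rangle$ denotes plugging (which may capture variables); $W\langle\langle t\rangle\rangle$ means plugging where $W$ does not capture the free variables of $t$. Root rules: (multiplicative) $S\langle \lambda x.t\rangle u \mapsto_m S\langle t[x\backslash u]\rangle$; (exponential) $W\langle\langle x\rangle\rangle[x\backslash u] \mapsto_{e} W\langle\langle u\rangle\rangle[x\backslash u]$ for $W$ a weak context; (GC by value) $t[x\backslash S\langle v\rangle] \mapsto_{gcv} S\langle t\rangle$ if $x\notin\mathrm{fv}(t)$, $v$ a value. $\to_{wm}$, $\to_{we}$, $\to_{wgcv}$ are the closures of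 these root rules under weak contexts, and $\to_w := \to_{wm}\cup\to_{we}\cup\to_{wgcv}$. Call-by-value $\lambda$-calculus: $\lambda$-terms $t ::= x\mid \lambda x.t\mid tu$, values are abstractions, CbV contexts $V ::= \langle\cdot\rangle \mid t V \mid V t$, root rule $(\lambda x.t)v \mapsto_{\beta_v} t\{x:=v\}$ (meta-level capture-avoiding substitution) for $v$ a value, and $\to_{\beta_v}$ its closure under CbV contexts. Contextual equivalence: for a rewriting relation $\to$ on a language of terms, with contexts being terms of that language with exactly one hole (placed anywhere, including under abstractions), $t\equiv u$ iff for every context $C$ such that $C\langle t\rangle$ and $C\langle u\rangle$ are closed, $C\langle t\rangle$ is weakly $\to$-normalizing (reduces to a $\to$-normal form) iff $C\langle u\rangle$ is. $\equiv_S$ is this for $\to_w$ on SSC terms and contexts, $\equiv_V$ for $\to_{\beta_v}$ on $\lambda$-terms and $\lambda$-contexts. *)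

theory Defs
  imports Main
begin

text \<open>Terms of the SSC, with de Bruijn indices (so terms are identified up to
alpha-renaming).  ES t u is the explicit substitution t[x\u]: it binds index 0
in t, and u is not under the binder.\<close>

datatype trm = Var nat | Lam trm | App trm trm | ES trm trm

fun shift :: "nat \<Rightarrow> nat \<Rightarrow> trm \<Rightarrow> trm" where
  "shift d c (Var i) = (if i < c then Var i else Var (i + d))"
| "shift d c (Lam t) = Lam (shift d (Suc c) t)"
| "shift d c (App t u) = App (shift d c t) (shift d c u)"
| "shift d c (ES t u) = ES (shift d (Suc c) t) (shift d c u)"

text \<open>Remove the (unused) variable with index c, decrementing the larger ones.\<close>
fun down :: "nat \<Rightarrow> trm \<Rightarrow> trm" where
  "down c (Var i) = (if i < c then Var i else Var (i - 1))"
| "down c (Lam t) = Lam (down (Suc c) t)"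
| "down c (App t u) = App (down c t) (down c u)"
| "down c (ES t u) = ES (down (Suc c) t) (down c u)"

fun fvs :: "trm \<Rightarrow> nat set" where
  "fvs (Var i) = {i}"
| "fvs (Lam t) = (\<lambda>i. i - 1) ` (fvs t - {0})"
| "fvs (App t u) = fvs t \<union> fvs u"
| "fvs (ES t u) = (\<lambda>i. i - 1) ` (fvs t - {0}) \<union> fvs u"

definition closed :: "trm \<Rightarrow> bool" where
  "closed t \<longleftrightarrow> fvs t = {}"

text \<open>Substitution contexts S = <.>[x1\u1]...[xk\uk], represented by the list
[u1,...,uk]; the hole is under k binders.\<close>
fun plugS :: "trm list \<Rightarrow> trm \<Rightarrow> trm" where
  "plugS [] t = t"
| "plugS (u # us) t = plugS us (ES t u)"

datatype wctx = WHole | WAppL wctx trm | WAppR trm wctx | WESArg trm wctx | WESBody wctx trm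

fun plugW :: "wctx \<Rightarrow> trm \<Rightarrow> trm" where
  "plugW WHole t = t"
| "plugW (WAppL W u) t = App (plugW W t) u"
| "plugW (WAppR u W) t = App u (plugW W t)"
| "plugW (WESArg u W) t = ES u (plugW W t)"
| "plugW (WESBody W u) t = ES (plugW W t) u"

fun depthW :: "wctx \<Rightarrow> nat" where
  "depthW WHole = 0"
| "depthW (WAppL W u) = depthW W"
| "depthW (WAppR u W) = depthW W"
| "depthW (WESArg u W) = depthW W"
| "depthW (WESBody W u) = Suc (depthW W)"

inductive root_m :: "trm \<Rightarrow> trm \<Rightarrow> bool" where
  "root_m (App (plugS S (Lam t)) u) (plugS S (ES t (shift (length S) 0 u)))"

text \<open>W<<x>>[x\u] -> W<<u>>[x\u]: the occurrence of x in the hole refers to the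
outer ES binder (index depthW W), and u is shifted under the binders.\<close>
inductive root_e :: "trm \<Rightarrow> trm \<Rightarrow> bool" where
  "root_e (ES (plugW W (Var (depthW W))) u)
          (ES (plugW W (shift (Suc (depthW W)) 0 u)) u)"

inductive root_gcv :: "trm \<Rightarrow> trm \<Rightarrow> bool" where
  "0 \<notin> fvs t \<Longrightarrow>
   root_gcv (ES t (plugS S (Lam v))) (plugS S (shift (length S) 0 (down 0 t)))"

inductive wstep :: "trm \<Rightarrow> trm \<Rightarrow> bool" where
  m: "root_m t t' \<Longrightarrow> wstep t t'"
| e: "root_e t t' \<Longrightarrow> wstep t t'"
| gcv: "root_gcv t t' \<Longrightarrow> wstep t t'"
| appL: "wstep t t' \<Longrightarrow> wstep (App t u) (App t' u)"
| appR: "wstep t t' \<Longrightarrow> wstep (App u t) (App u t')"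
| esBody: "wstep t t' \<Longrightarrow> wstep (ES t u) (ES t' u)"
| esArg: "wstep t t' \<Longrightarrow> wstep (ES u t) (ES u t')"

definition wnorm :: "trm \<Rightarrow> bool" where
  "wnorm t \<longleftrightarrow> (\<exists>n. wstep\<^sup>*\<^sup>* t n \<and> (\<nexists>n'. wstep n n'))"

text \<open>General SSC contexts (one hole, anywhere, plugging may capture).\<close>
datatype ctx = CHole | CLam ctx | CAppL ctx trm | CAppR trm ctx | CESBody ctx trm | CESArg trm ctx

fun plug :: "ctx \<Rightarrow> trm \<Rightarrow> trm" where
  "plug CHole t = t"
| "plug (CLam C) t = Lam (plug C t)"
| "plug (CAppL C u) t = App (plug C t) u"
| "plug (CAppR u C) t = App u (plug C t)"
| "plug (CESBody C u) t = ES (plug C t) u"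
| "plug (CESArg u C) t = ES u (plug C t)"

definition equiv_S :: "trm \<Rightarrow> trm \<Rightarrow> bool" where
  "equiv_S t u \<longleftrightarrow>
     (\<forall>C. closed (plug C t) \<and> closed (plug C u) \<longrightarrow> (wnorm (plug C t) \<longleftrightarrow> wnorm (plug C u)))"

datatype lterm = LVar nat | LLam lterm | LApp lterm lterm

fun lshift :: "nat \<Rightarrow> nat \<Rightarrow> lterm \<Rightarrow> lterm" where
  "lshift d c (LVar i) = (if i < c then LVar i else LVar (i + d))"
| "lshift d c (LLam t) = LLam (lshift d (Suc c) t)"
| "lshift d c (LApp t u) = LApp (lshift d c t) (lshift d c u)"

text \<open>lsubst t k s: capture-avoiding substitution of s for index k in t
(with the indices above k decremented), i.e. t{x:=s}.\<close>
fun lsubst :: "lterm \<Rightarrow> nat \<Rightarrow> lterm \<Rightarrow> lterm" where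
  "lsubst (LVar i) k s = (if i < k then LVar i else if i = k then lshift k 0 s else LVar (i - 1))"
| "lsubst (LLam t) k s = LLam (lsubst t (Suc k) s)"
| "lsubst (LApp t u) k s = LApp (lsubst t k s) (lsubst u k s)"

fun lfvs :: "lterm \<Rightarrow> nat set" where
  "lfvs (LVar i) = {i}"
| "lfvs (LLam t) = (\<lambda>i. i - 1) ` (lfvs t - {0})"
| "lfvs (LApp t u) = lfvs t \<union> lfvs u"

definition lclosed :: "lterm \<Rightarrow> bool" where
  "lclosed t \<longleftrightarrow> lfvs t = {}"

inductive bvstep :: "lterm \<Rightarrow> lterm \<Rightarrow> bool" where
  beta: "bvstep (LApp (LLam t) (LLam v)) (lsubst t 0 (LLam v))"
| appL: "bvstep t t' \<Longrightarrow> bvstep (LApp t u) (LApp t' u)"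
| appR: "bvstep t t' \<Longrightarrow> bvstep (LApp u t) (LApp u t')"

definition bvnorm :: "lterm \<Rightarrow> bool" where
  "bvnorm t \<longleftrightarrow> (\<exists>n. bvstep\<^sup>*\<^sup>* t n \<and> (\<nexists>n'. bvstep n n'))"

datatype lctx = LHole | LCLam lctx | LCAppL lctx lterm | LCAppR lterm lctx

fun lplug :: "lctx \<Rightarrow> lterm \<Rightarrow> lterm" where
  "lplug LHole t = t"
| "lplug (LCLam C) t = LLam (lplug C t)"
| "lplug (LCAppL C u) t = LApp (lplug C t) u"
| "lplug (LCAppR u C) t = LApp u (lplug C t)"

definition equiv_V :: "lterm \<Rightarrow> lterm \<Rightarrow> bool" where
  "equiv_V t u \<longleftrightarrow>
     (\<forall>C. lclosed (lplug C t) \<and> lclosed (lplug C u) \<longrightarrow> (bvnorm (lplug C t) \<longleftrightarrow> bvnorm (lplug C u)))"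

fun emb :: "lterm \<Rightarrow> trm" where
  "emb (LVar i) = Var i"
| "emb (LLam t) = Lam (emb t)"
| "emb (LApp t u) = App (emb t) (emb u)"

end

theory Submission
  imports Defs
begin

fun tr :: "trm \<Rightarrow> lterm" where
  "tr (Var i) = LVar i"
| "tr (Lam t) = LLam (tr t)"
| "tr (App t u) = LApp (tr t) (tr u)"
| "tr (ES t u) = LApp (LLam (tr t)) (tr u)"

fun psub :: "lterm list \<Rightarrow> nat \<Rightarrow> lterm \<Rightarrow> lterm" where
  "psub s k (LVar i) = (if i < k then LVar i else if i - k < length s then lshift k 0 (s ! (i - k)) else LVar (i - length s))"
| "psub s k (LLam t) = LLam (psub s (Suc k) t)"
| "psub s k (LApp t u) = LApp (psub s k t) (psub s k u)"

inductive bs :: "lterm \<Rightarrow> lterm \<Rightarrow> bool" where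
  bs_lam: "bs (LLam t) (LLam t)"
| bs_app: "bs p (LLam c) \<Longrightarrow> bs q w \<Longrightarrow> bs (lsubst c 0 w) v \<Longrightarrow> bs (LApp p q) v"

lemma lshift_0[simp]: "lshift 0 c t = t"
  by (induction t arbitrary: c) auto

lemma psub_nil[simp]: "psub [] k t = t"
  by (induction t arbitrary: k) auto

lemma lsubst_lshift: "c \<le> k \<Longrightarrow> k \<le> c + n \<Longrightarrow> lsubst (lshift (Suc n) c x) k w = lshift n c x"
  by (induction x arbitrary: c k) auto

lemma psub_lsubst: "lsubst (psub s (Suc k) t) k w = psub (w#s) k t"
proof (induction t arbitrary: k)
  case (LVar i)
  show ?case
  proof (cases "i < k")
    case True then show ?thesis by simp
  next
    case False
    show ?thesis
    proof (cases "i = k")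
      case True then show ?thesis by simp
    next
      case ne: False
      show ?thesis
      proof (cases "i - Suc k < length s")
        case True
        then have "i - k = Suc (i - Suc k)" using False ne by simp
        then show ?thesis using True False ne by (simp add: lsubst_lshift)
      next
        case F2: False
        then show ?thesis using False ne by auto
      qed
    qed
  qed
qed auto

lemma psub_lshift: "m \<le> length s \<Longrightarrow> psub s k (lshift m k x) = psub (drop m s) k x"
proof (induction x arbitrary: k)
  case (LVar i)
  then show ?case by (auto simp: add.commute)
qed auto

lemma tr_shift: "tr (shift d c t) = lshift d c (tr t)"
  by (induction t arbitrary: c) auto

lemma psub_down: "k \<notin> fvs t \<Longrightarrow> psub s k (tr (down k t)) = psub (w#s) k (tr t)"
proof (induction t arbitrary: k)
  case (Var i)
  then show ?case
    by (cases "i < k") (auto simp: Suc_diff_Suc)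
next
  case (Lam t)
  have "Suc k \<notin> fvs t" using Lam.prems by (force)
  then show ?case using Lam.IH by simp
next
  case (ES t u)
  have "Suc k \<notin> fvs t" using ES.prems by (force)
  then show ?case using ES by simp
qed auto


lemma bs_LLam_iff[simp]: "bs (LLam c) v \<longleftrightarrow> v = LLam c"
  by (auto elim: bs.cases intro: bs.intros)

lemma bs_LVar[simp]: "\<not> bs (LVar i) v"
  by (auto elim: bs.cases)

lemma bs_LApp_iff: "bs (LApp p q) v \<longleftrightarrow> (\<exists>c w. bs p (LLam c) \<and> bs q w \<and> bs (lsubst c 0 w) v)"
  by (rule iffI, erule bs.cases, auto intro: bs.intros)

lemma bs_val: "bs t v \<Longrightarrow> \<exists>b. v = LLam b"
  by (induction rule: bs.induct) auto

lemma bs_det: "bs t v \<Longrightarrow> bs t v' \<Longrightarrow> v' = v"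
proof (induction arbitrary: v' rule: bs.induct)
  case (bs_lam t) then show ?case by simp
next
  case (bs_app p c q w v)
  from bs_app.prems obtain c' w' where "bs p (LLam c')" "bs q w'" "bs (lsubst c' 0 w') v'"
    by (auto simp: bs_LApp_iff)
  then show ?case using bs_app.IH by fastforce
qed

lemma ev_ES: "bs (psub s 0 (tr (ES t u))) v \<longleftrightarrow> (\<exists>w. bs (psub s 0 (tr u)) w \<and> bs (psub (w#s) 0 (tr t)) v)"
  by (simp add: bs_LApp_iff psub_lsubst[where k=0, simplified])

fun sev :: "lterm list \<Rightarrow> trm list \<Rightarrow> lterm list \<Rightarrow> bool" where
  "sev s [] ws = (ws = [])"
| "sev s (u#us) ws = (\<exists>w ws'. ws = w#ws' \<and> sev s us ws' \<and> bs (psub (ws'@s) 0 (tr u)) w)"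

lemma sev_length: "sev s S ws \<Longrightarrow> length ws = length S"
  by (induction S arbitrary: ws) auto

lemma ev_plugS: "bs (psub s 0 (tr (plugS S p))) v \<longleftrightarrow> (\<exists>ws. sev s S ws \<and> bs (psub (ws@s) 0 (tr p)) v)"
proof (induction S arbitrary: p)
  case Nil then show ?case by simp
next
  case (Cons u us)
  have "bs (psub s 0 (tr (plugS (u # us) p))) v \<longleftrightarrow>
     (\<exists>ws. sev s us ws \<and> (\<exists>w. bs (psub (ws @ s) 0 (tr u)) w \<and> bs (psub (w # ws @ s) 0 (tr p)) v))"
    by (simp only: plugS.simps Cons.IH ev_ES)
  also have "\<dots> \<longleftrightarrow> (\<exists>ws. sev s (u#us) ws \<and> bs (psub (ws@s) 0 (tr p)) v)"
    by fastforce
  finally show ?case .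
qed

lemma psub_shift_tr: "length ws = k \<Longrightarrow> psub (ws@s) 0 (tr (shift k 0 u)) = psub s 0 (tr u)"
  using psub_lshift[of k "ws@s" 0 "tr u"] by (simp add: tr_shift)


lemma hole_back:
  assumes "\<And>r x. length r = depthW W \<Longrightarrow> bs (psub (r@s) 0 (tr p')) x \<Longrightarrow> bs (psub (r@s) 0 (tr p)) x"
    and "bs (psub s 0 (tr (plugW W p'))) v"
  shows "bs (psub s 0 (tr (plugW W p))) v"
  using assms
proof (induction W arbitrary: s v)
  case WHole
  then show ?case using WHole(1)[of "[]"] by simp
next
  case (WAppL W u)
  then show ?case by (auto simp: bs_LApp_iff)
next
  case (WAppR u W)
  then show ?case by (auto simp: bs_LApp_iff)
next
  case (WESArg u W)
  then show ?case by (auto simp: ev_ES simp del: tr.simps)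
next
  case (WESBody W u)
  from WESBody.prems(2) obtain w where w: "bs (psub s 0 (tr u)) w"
    "bs (psub (w#s) 0 (tr (plugW W p'))) v"
    by (auto simp: ev_ES simp del: tr.simps)
  have "bs (psub (w#s) 0 (tr (plugW W p))) v"
  proof (rule WESBody.IH[OF _ w(2)])
    fix r x assume "length r = depthW W" "bs (psub (r @ w # s) 0 (tr p')) x"
    then show "bs (psub (r @ w # s) 0 (tr p)) x"
      using WESBody.prems(1)[of "r@[w]" x] by simp
  qed
  then show ?case using w(1) by (auto simp: ev_ES simp del: tr.simps)
qed

lemma step_back: "wstep t t' \<Longrightarrow> bs (psub s 0 (tr t')) v \<Longrightarrow> bs (psub s 0 (tr t)) v"
proof (induction arbitrary: s v rule: wstep.induct)
  case (m t t')
  then obtain S b u where t: "t = App (plugS S (Lam b)) u" and t': "t' = plugS S (ES b (shift (length S) 0 u))"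
    by (auto elim: root_m.cases)
  from m.prems obtain ws where ws: "sev s S ws" "bs (psub (ws@s) 0 (tr (ES b (shift (length S) 0 u)))) v"
    unfolding t' ev_plugS by blast
  have len: "length ws = length S" using ws(1) by (rule sev_length)
  from ws(2) obtain w where w: "bs (psub s 0 (tr u)) w" "bs (psub (w#ws@s) 0 (tr b)) v"
    unfolding ev_ES using psub_shift_tr[OF len] by auto
  have f: "bs (psub s 0 (tr (plugS S (Lam b)))) (LLam (psub (ws@s) (Suc 0) (tr b)))"
    unfolding ev_plugS using ws(1) by auto
  have "lsubst (psub (ws@s) (Suc 0) (tr b)) 0 w = psub (w#ws@s) 0 (tr b)" by (rule psub_lsubst)
  then show ?case unfolding t tr.simps(3) psub.simps(3) bs_LApp_iff using f w
    by metis
next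
  case (e t t')
  then obtain W u where t: "t = ES (plugW W (Var (depthW W))) u"
    and t': "t' = ES (plugW W (shift (Suc (depthW W)) 0 u)) u"
    by (auto elim: root_e.cases)
  from e.prems obtain w where w: "bs (psub s 0 (tr u)) w"
    "bs (psub (w#s) 0 (tr (plugW W (shift (Suc (depthW W)) 0 u)))) v"
    unfolding t' ev_ES by blast
  obtain b where wb: "w = LLam b" using bs_val[OF w(1)] by blast
  have "bs (psub (w#s) 0 (tr (plugW W (Var (depthW W))))) v"
  proof (rule hole_back[OF _ w(2)])
    fix r x assume r: "length r = depthW W" and x: "bs (psub (r @ w # s) 0 (tr (shift (Suc (depthW W)) 0 u))) x"
    have "psub (r @ w # s) 0 (tr (shift (Suc (depthW W)) 0 u)) = psub s 0 (tr u)"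
      using psub_shift_tr[of "r@[w]" "Suc (depthW W)" s u] r by simp
    with x w(1) have "x = w" using bs_det by auto
    moreover have "psub (r @ w # s) 0 (tr (Var (depthW W))) = w" using r by (simp add: nth_append)
    ultimately show "bs (psub (r @ w # s) 0 (tr (Var (depthW W)))) x" using wb by simp
  qed
  then show ?case unfolding t ev_ES using w(1) by blast
next
  case (gcv t t')
  then obtain S b v0 where t: "t = ES b (plugS S (Lam v0))" and t': "t' = plugS S (shift (length S) 0 (down 0 b))"
    and nf: "0 \<notin> fvs b"
    by (auto elim: root_gcv.cases)
  from gcv.prems obtain ws where ws: "sev s S ws" "bs (psub (ws@s) 0 (tr (shift (length S) 0 (down 0 b)))) v"
    unfolding t' ev_plugS by blast
  have len: "length ws = length S" using ws(1) by (rule sev_length)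
  have f: "bs (psub s 0 (tr (plugS S (Lam v0)))) (LLam (psub (ws@s) (Suc 0) (tr v0)))"
    unfolding ev_plugS using ws(1) by auto
  have "bs (psub (LLam (psub (ws@s) (Suc 0) (tr v0)) # s) 0 (tr b)) v"
    using ws(2) psub_shift_tr[OF len] psub_down[OF nf] by metis
  then show ?case unfolding t ev_ES using f by blast
next
  case (appL t t' u)
  then show ?case by (auto simp: bs_LApp_iff)
next
  case (appR t t' u)
  then show ?case by (auto simp: bs_LApp_iff)
next
  case (esBody t t' u)
  then show ?case by (auto simp: ev_ES simp del: tr.simps)
next
  case (esArg t t' u)
  then show ?case by (auto simp: ev_ES simp del: tr.simps)
qed


fun wfv :: "trm \<Rightarrow> nat set" where
  "wfv (Var i) = {i}"
| "wfv (Lam t) = {}"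
| "wfv (App t u) = wfv t \<union> wfv u"
| "wfv (ES t u) = (\<lambda>i. i - 1) ` (wfv t - {0}) \<union> wfv u"

lemma wfv_fvs: "wfv t \<subseteq> fvs t"
  by (induction t) auto

lemma wfv_plugW: "i \<in> wfv t \<Longrightarrow> \<exists>W. t = plugW W (Var (i + depthW W))"
proof (induction t arbitrary: i)
  case (Var j) then show ?case by (intro exI[of _ WHole]) simp
next
  case (Lam t) then show ?case by simp
next
  case (App t u)
  then show ?case
  proof (cases "i \<in> wfv t")
    case True
    then obtain W where "t = plugW W (Var (i + depthW W))" using App.IH(1) by blast
    then show ?thesis by (intro exI[of _ "WAppL W u"]) simp
  next
    case False
    then have "i \<in> wfv u" using App.prems by simp
    then obtain W where "u = plugW W (Var (i + depthW W))" using App.IH(2) by blast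
    then show ?thesis by (intro exI[of _ "WAppR t W"]) simp
  qed
next
  case (ES t u)
  then show ?case
  proof (cases "i \<in> wfv u")
    case True
    then obtain W where "u = plugW W (Var (i + depthW W))" using ES.IH(2) by blast
    then show ?thesis by (intro exI[of _ "WESArg t W"]) simp
  next
    case False
    then obtain x where "x \<in> wfv t" "x \<noteq> 0" "i = x - 1" using ES.prems by auto
    then have "Suc i \<in> wfv t" by simp
    then obtain W where "t = plugW W (Var (Suc i + depthW W))" using ES.IH(1) by blast
    then show ?thesis by (intro exI[of _ "WESBody W u"]) simp
  qed
qed

abbreviation normal :: "trm \<Rightarrow> bool" where
  "normal n \<equiv> \<not> (\<exists>n'. wstep n n')"

lemma plugS_append: "plugS (S@[u]) t = ES (plugS S t) u"
  by (induction S arbitrary: t) auto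

lemma normal_eval: "normal n \<Longrightarrow> wfv n = {} \<Longrightarrow>
   (\<exists>v. bs (psub s 0 (tr n)) v) \<and> (\<exists>S b. n = plugS S (Lam b))"
proof (induction n arbitrary: s)
  case (Var i) then show ?case by simp
next
  case (Lam t)
  then show ?case by (auto intro: bs.intros exI[of _ "[]"])
next
  case (App p q)
  have "normal p" using App.prems(1) wstep.appL by blast
  moreover have "wfv p = {}" using App.prems(2) by simp
  ultimately obtain S b where "p = plugS S (Lam b)" using App.IH(1)[of s] by blast
  then have "wstep (App p q) (plugS S (ES b (shift (length S) 0 q)))"
    by (auto intro: wstep.m root_m.intros)
  then show ?case using App.prems(1) by blast
next
  case (ES p q)
  have np: "normal p" using ES.prems(1) wstep.esBody by blast
  have nq: "normal q" using ES.prems(1) wstep.esArg by blast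
  have "0 \<notin> wfv p"
  proof
    assume "0 \<in> wfv p"
    then obtain W where "p = plugW W (Var (depthW W))" using wfv_plugW by fastforce
    then have "wstep (ES p q) (ES (plugW W (shift (Suc (depthW W)) 0 q)) q)"
      by (auto intro: wstep.e root_e.intros)
    then show False using ES.prems(1) by blast
  qed
  with ES.prems(2) have wp: "wfv p = {}" by auto
  have wq: "wfv q = {}" using ES.prems(2) by simp
  obtain w where w: "bs (psub s 0 (tr q)) w" using ES.IH(2)[OF nq wq] by blast
  obtain v where v: "bs (psub (w#s) 0 (tr p)) v" using ES.IH(1)[OF np wp] by blast
  obtain S b where "p = plugS S (Lam b)" using ES.IH(1)[OF np wp, of s] by blast
  then have "ES p q = plugS (S@[q]) (Lam b)" by (simp add: plugS_append)
  moreover have "bs (psub s 0 (tr (ES p q))) v" unfolding ev_ES using w v by blast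
  ultimately show ?case by blast
qed


lemma img_bnd[simp]: "(\<lambda>i. i - Suc 0) ` (X - {0}) \<subseteq> {..<n} \<longleftrightarrow> X \<subseteq> {..<Suc n}"
proof
  assume a: "(\<lambda>i. i - Suc 0) ` (X - {0}) \<subseteq> {..<n}"
  show "X \<subseteq> {..<Suc n}"
  proof
    fix x assume "x \<in> X"
    then show "x \<in> {..<Suc n}" using a by (cases "x = 0") auto
  qed
qed auto

lemma fvs_Lam_bnd[simp]: "fvs (Lam t) \<subseteq> {..<n} \<longleftrightarrow> fvs t \<subseteq> {..<Suc n}"
  by (simp add: img_bnd)

lemma fvs_ES_bnd[simp]: "fvs (ES t u) \<subseteq> {..<n} \<longleftrightarrow> fvs t \<subseteq> {..<Suc n} \<and> fvs u \<subseteq> {..<n}"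
  by (simp add: img_bnd)

lemma shift_bnd: "fvs t \<subseteq> {..<n} \<Longrightarrow> fvs (shift d c t) \<subseteq> {..<n+d}"
proof (induction t arbitrary: n c)
  case (Lam t)
  then have "fvs (shift d (Suc c) t) \<subseteq> {..<Suc n + d}" using Lam.IH[of "Suc n" "Suc c"] by simp
  then show ?case by simp
next
  case (ES t u)
  then have "fvs (shift d (Suc c) t) \<subseteq> {..<Suc n + d}" using ES.IH(1)[of "Suc n" "Suc c"] by simp
  then show ?case using ES by simp
qed auto

lemma down_bnd: "c \<notin> fvs t \<Longrightarrow> fvs t \<subseteq> {..<Suc n} \<Longrightarrow> c \<le> n \<Longrightarrow> fvs (down c t) \<subseteq> {..<n}"
proof (induction t arbitrary: n c)
  case (Var i) then show ?case by auto
next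
  case (Lam t)
  have "Suc c \<notin> fvs t" using Lam.prems(1) by force
  then show ?case using Lam by simp
next
  case (App t u) then show ?case by simp
next
  case (ES t u)
  have "Suc c \<notin> fvs t" using ES.prems(1) by force
  then show ?case using ES by simp
qed

fun bndS :: "nat \<Rightarrow> trm list \<Rightarrow> bool" where
  "bndS n [] = True"
| "bndS n (u#us) = (bndS n us \<and> fvs u \<subseteq> {..<n + length us})"

lemma plugS_bnd: "fvs (plugS S x) \<subseteq> {..<n} \<longleftrightarrow> bndS n S \<and> fvs x \<subseteq> {..<n + length S}"
  by (induction S arbitrary: x) (auto simp: ac_simps)

lemma plugW_bnd: "(fvs x \<subseteq> {..<n + depthW W} \<Longrightarrow> fvs y \<subseteq> {..<n + depthW W}) \<Longrightarrow>
   fvs (plugW W x) \<subseteq> {..<n} \<Longrightarrow> fvs (plugW W y) \<subseteq> {..<n}"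
proof (induction W arbitrary: n)
  case (WESBody W u)
  then show ?case using WESBody.IH[of "Suc n"] by simp
qed auto

lemma wstep_bnd: "wstep t t' \<Longrightarrow> fvs t \<subseteq> {..<n} \<Longrightarrow> fvs t' \<subseteq> {..<n}"
proof (induction arbitrary: n rule: wstep.induct)
  case (m t t')
  then obtain S b u where t: "t = App (plugS S (Lam b)) u" and t': "t' = plugS S (ES b (shift (length S) 0 u))"
    by (auto elim: root_m.cases)
  show ?case using m.prems shift_bnd[of u n "length S" 0] unfolding t t' by (auto simp: plugS_bnd)
next
  case (e t t')
  then obtain W u where t: "t = ES (plugW W (Var (depthW W))) u"
    and t': "t' = ES (plugW W (shift (Suc (depthW W)) 0 u)) u"
    by (auto elim: root_e.cases)
  have u: "fvs u \<subseteq> {..<n}" using e.prems t by simp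
  have "fvs (plugW W (shift (Suc (depthW W)) 0 u)) \<subseteq> {..<Suc n}"
    by (rule plugW_bnd[of "Var (depthW W)"]) (use e.prems t shift_bnd[OF u, of "Suc (depthW W)" 0] in auto)
  then show ?case using u t' by simp
next
  case (gcv t t')
  then obtain S b v0 where t: "t = ES b (plugS S (Lam v0))" and t': "t' = plugS S (shift (length S) 0 (down 0 b))"
    and nf: "0 \<notin> fvs b"
    by (auto elim: root_gcv.cases)
  have "fvs (down 0 b) \<subseteq> {..<n}" using down_bnd[OF nf, of n] gcv.prems t by simp
  then show ?case using gcv.prems shift_bnd[of "down 0 b" n "length S" 0] unfolding t t' by (auto simp: plugS_bnd)
qed auto

lemma steps_bnd: "wstep\<^sup>*\<^sup>* t t' \<Longrightarrow> fvs t \<subseteq> {..<n} \<Longrightarrow> fvs t' \<subseteq> {..<n}"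
  by (induction rule: rtranclp_induct) (auto dest: wstep_bnd)

lemma closed_bnd: "closed t \<longleftrightarrow> fvs t \<subseteq> {..<0}"
  by (auto simp: closed_def)

lemma wnorm_bs: "closed s \<Longrightarrow> wnorm s \<Longrightarrow> \<exists>v. bs (tr s) v"
proof -
  assume c: "closed s" and "wnorm s"
  then obtain n where sn: "wstep\<^sup>*\<^sup>* s n" and nn: "normal n" unfolding wnorm_def by blast
  have "fvs n \<subseteq> {..<0}" using steps_bnd[OF sn, of 0] c by (simp add: closed_bnd)
  then have "wfv n = {}" using wfv_fvs[of n] by auto
  then obtain v where "bs (psub [] 0 (tr n)) v" using normal_eval[OF nn] by blast
  with sn have "bs (psub [] 0 (tr s)) v"
    by (induction rule: converse_rtranclp_induct) (use step_back[where s="[]"] in auto)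
  then show ?thesis by auto
qed


inductive ans :: "trm \<Rightarrow> bool" where
  ans_lam: "ans (Lam b)"
| ans_es: "ans t \<Longrightarrow> ans a \<Longrightarrow> ans (ES t a)"

lemma ans_ES_iff[simp]: "ans (ES t a) \<longleftrightarrow> ans t \<and> ans a"
  by (auto elim: ans.cases intro: ans.intros)
lemma ans_App[simp]: "\<not> ans (App t a)"
  by (auto elim: ans.cases)
lemma ans_Var[simp]: "\<not> ans (Var i)"
  by (auto elim: ans.cases)

lemma ans_shift: "ans t \<Longrightarrow> ans (shift d c t)"
  by (induction arbitrary: c rule: ans.induct) (auto intro: ans.intros)
lemma ans_down: "ans t \<Longrightarrow> ans (down c t)"
  by (induction arbitrary: c rule: ans.induct) (auto intro: ans.intros)

lemma ans_plugS_iff: "ans (plugS S t) \<longleftrightarrow> ans t \<and> (\<forall>u\<in>set S. ans u)"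
  by (induction S arbitrary: t) auto

lemma ans_decomp: "ans a \<Longrightarrow> \<exists>S b. a = plugS S (Lam b) \<and> (\<forall>u\<in>set S. ans u)"
proof (induction rule: ans.induct)
  case (ans_lam b) then show ?case by (intro exI[of _ "[]"]) auto
next
  case (ans_es t a)
  then obtain S b where "t = plugS S (Lam b)" "\<forall>u\<in>set S. ans u" by blast
  then show ?case using ans_es by (intro exI[of _ "S@[a]"]) (auto simp: plugS_append)
qed

lemma ans_plugW_Var: "\<not> ans (plugW W (Var i))"
  by (induction W) auto

lemma size_shift[simp]: "size (shift d c t) = size t"
  by (induction t arbitrary: c) auto
lemma size_down[simp]: "size (down c t) = size t"
  by (induction t arbitrary: c) auto
lemma size_plugS: "size (plugS S x) + size y = size (plugS S y) + size x"
  by (induction S arbitrary: x y) auto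

lemma ans_step: "wstep t t' \<Longrightarrow> ans t \<Longrightarrow> ans t' \<and> size t' < size t"
proof (induction rule: wstep.induct)
  case (m t t') then show ?case by (auto elim: root_m.cases)
next
  case (e t t') then show ?case by (auto elim: root_e.cases simp: ans_plugW_Var)
next
  case (gcv t t')
  then obtain S b v0 where t: "t = ES b (plugS S (Lam v0))" and t': "t' = plugS S (shift (length S) 0 (down 0 b))"
    by (auto elim: root_gcv.cases)
  have "ans t'" using gcv.prems unfolding t t' by (auto simp: ans_plugS_iff intro: ans_shift ans_down)
  moreover have "size t' < size t"
    using size_plugS[of S "Lam v0" "shift (length S) 0 (down 0 b)"] unfolding t t' by simp
  ultimately show ?case by blast
qed auto

lemma ans_wnorm: "ans a \<Longrightarrow> \<exists>n. wstep\<^sup>*\<^sup>* a n \<and> normal n"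
proof (induction "size a" arbitrary: a rule: less_induct)
  case less
  show ?case
  proof (cases "normal a")
    case True then show ?thesis by blast
  next
    case False
    then obtain a' where st: "wstep a a'" by blast
    with ans_step[OF st less.prems] less.hyps obtain n where "wstep\<^sup>*\<^sup>* a' n" "normal n" by blast
    then show ?thesis using st by (meson converse_rtranclp_into_rtranclp)
  qed
qed


fun compW :: "wctx \<Rightarrow> wctx \<Rightarrow> wctx" where
  "compW WHole W' = W'"
| "compW (WAppL W u) W' = WAppL (compW W W') u"
| "compW (WAppR u W) W' = WAppR u (compW W W')"
| "compW (WESArg u W) W' = WESArg u (compW W W')"
| "compW (WESBody W u) W' = WESBody (compW W W') u"

lemma plugW_compW[simp]: "plugW (compW W W') t = plugW W (plugW W' t)"
  by (induction W) auto

fun wenv :: "lterm list \<Rightarrow> wctx \<Rightarrow> lterm list \<Rightarrow> bool" where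
  "wenv s WHole r = (r = s)"
| "wenv s (WAppL W u) r = wenv s W r"
| "wenv s (WAppR u W) r = wenv s W r"
| "wenv s (WESArg u W) r = wenv s W r"
| "wenv s (WESBody W a) r = (ans a \<and> (\<exists>w. bs (psub s 0 (tr a)) w \<and> wenv (w#s) W r))"

lemma wenv_compW: "wenv s (compW W W') r' \<longleftrightarrow> (\<exists>r. wenv s W r \<and> wenv r W' r')"
  by (induction W arbitrary: s) auto

lemma wenv_app: "wenv s W r \<Longrightarrow> \<exists>r'. r = r' @ s \<and> length r' = depthW W"
proof (induction W arbitrary: s)
  case (WESBody W a)
  then obtain w where "wenv (w#s) W r" by auto
  then obtain r' where "r = r' @ w # s" "length r' = depthW W" using WESBody.IH by blast
  then show ?case by (intro exI[of _ "r'@[w]"]) auto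
qed auto

lemma wenv_vals: "wenv s W r \<Longrightarrow> \<forall>x\<in>set s. \<exists>b. x = LLam b \<Longrightarrow> \<forall>x\<in>set r. \<exists>b. x = LLam b"
proof (induction W arbitrary: s)
  case (WESBody W a)
  then obtain w where "bs (psub s 0 (tr a)) w" "wenv (w#s) W r" by auto
  then show ?case using WESBody bs_val by (metis set_ConsD)
qed auto

fun wS :: "trm list \<Rightarrow> wctx" where
  "wS [] = WHole"
| "wS (u#us) = compW (wS us) (WESBody WHole u)"

lemma plugW_wS[simp]: "plugW (wS S) t = plugS S t"
  by (induction S arbitrary: t) auto

lemma wenv_wS: "sev s S ws \<Longrightarrow> \<forall>u\<in>set S. ans u \<Longrightarrow> wenv s (wS S) (ws@s)"
  by (induction S arbitrary: ws) (auto simp: wenv_compW)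

lemma wstep_plugW: "wstep t t' \<Longrightarrow> wstep (plugW W t) (plugW W t')"
  by (induction W) (auto intro: wstep.intros)

lemma steps_plugW: "wstep\<^sup>*\<^sup>* t t' \<Longrightarrow> wstep\<^sup>*\<^sup>* (plugW W t) (plugW W t')"
  by (induction rule: rtranclp_induct) (auto intro: wstep_plugW rtranclp.rtrancl_into_rtrancl)

lemma var_step: "wenv s W r \<Longrightarrow> i < depthW W \<Longrightarrow>
  \<exists>a'. ans a' \<and> wstep (plugW W (Var i)) (plugW W a') \<and> bs (psub r 0 (tr a')) (r ! i)"
proof (induction W arbitrary: s)
  case WHole then show ?case by simp
next
  case (WAppL W u)
  then show ?case by (auto intro: wstep.appL)
next
  case (WAppR u W)
  then show ?case by (auto intro: wstep.appR)
next
  case (WESArg u W)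
  then show ?case by (auto intro: wstep.esArg)
next
  case (WESBody W a)
  from WESBody.prems obtain w where a: "ans a" and w: "bs (psub s 0 (tr a)) w" and we: "wenv (w#s) W r" by auto
  show ?case
  proof (cases "i = depthW W")
    case True
    obtain r' where r: "r = r' @ w # s" "length r' = depthW W" using wenv_app[OF we] by blast
    let ?a' = "shift (Suc (depthW W)) 0 a"
    have "wstep (plugW (WESBody W a) (Var i)) (plugW (WESBody W a) ?a')"
      using True by (auto intro: wstep.e root_e.intros)
    moreover have "ans ?a'" using a by (rule ans_shift)
    moreover have "psub r 0 (tr ?a') = psub s 0 (tr a)"
      using psub_shift_tr[of "r'@[w]" "Suc (depthW W)" s a] r by simp
    moreover have "r ! i = w" using r True by (simp add: nth_append)
    ultimately show ?thesis using w by auto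
  next
    case False
    then have "i < depthW W" using WESBody.prems by simp
    then show ?thesis using WESBody.IH[OF we] by (auto intro: wstep.esBody)
  qed
qed


lemma claimC: "bs t v \<Longrightarrow> t = psub r 0 (tr p) \<Longrightarrow> wenv [] W r \<Longrightarrow>
  \<exists>a. wstep\<^sup>*\<^sup>* (plugW W p) (plugW W a) \<and> ans a \<and> bs (psub r 0 (tr a)) v"
proof (induction arbitrary: p r W rule: bs.induct)
  case (bs_lam c)
  obtain r' where rl: "r = r' @ []" "length r' = depthW W" using wenv_app[OF bs_lam.prems(2)] by blast
  show ?case
  proof (cases p)
    case (Var i)
    then have i: "i < length r" "r ! i = LLam c" using bs_lam.prems(1) by (auto split: if_splits)
    have "i < depthW W" using i rl by simp
    then obtain a' where "ans a'" "wstep (plugW W (Var i)) (plugW W a')" "bs (psub r 0 (tr a')) (r ! i)"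
      using var_step[OF bs_lam.prems(2)] by blast
    then show ?thesis using Var i by auto
  next
    case (Lam b)
    then show ?thesis using bs_lam.prems(1) by (auto intro: ans.intros bs.intros)
  qed (use bs_lam.prems(1) in auto)
next
  case (bs_app p0 c q0 w v)
  have vals: "\<forall>x\<in>set r. \<exists>b. x = LLam b" using wenv_vals[OF bs_app.prems(2)] by simp
  show ?case
  proof (cases p)
    case (Var i)
    then show ?thesis using bs_app.prems(1) vals by (auto split: if_splits dest!: nth_mem)
  next
    case (Lam b)
    then show ?thesis using bs_app.prems(1) by auto
  next
    case (App q1 q2)
    have p0: "p0 = psub r 0 (tr q1)" and q0: "q0 = psub r 0 (tr q2)" using bs_app.prems(1) App by auto
    have we1: "wenv [] (compW W (WAppL WHole q2)) r" using bs_app.prems(2) by (auto simp: wenv_compW)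
    obtain a1 where s1: "wstep\<^sup>*\<^sup>* (plugW W (App q1 q2)) (plugW W (App a1 q2))"
      and a1: "ans a1" and e1: "bs (psub r 0 (tr a1)) (LLam c)"
      using bs_app.IH(1)[OF p0 we1] by auto
    have we2: "wenv [] (compW W (WAppR a1 WHole)) r" using bs_app.prems(2) by (auto simp: wenv_compW)
    obtain a2 where s2: "wstep\<^sup>*\<^sup>* (plugW W (App a1 q2)) (plugW W (App a1 a2))"
      and a2: "ans a2" and e2: "bs (psub r 0 (tr a2)) w"
      using bs_app.IH(2)[OF q0 we2] by auto
    obtain S b where a1S: "a1 = plugS S (Lam b)" and Sans: "\<forall>u\<in>set S. ans u" using ans_decomp[OF a1] by blast
    obtain ws where ws: "sev r S ws" and cb: "c = psub (ws@r) (Suc 0) (tr b)"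
      using e1 unfolding a1S ev_plugS by auto
    have len: "length ws = length S" using ws by (rule sev_length)
    let ?a2' = "shift (length S) 0 a2"
    have s3: "wstep (plugW W (App a1 a2)) (plugW W (plugS S (ES b ?a2')))"
      unfolding a1S by (rule wstep_plugW) (auto intro: wstep.m root_m.intros)
    have t3: "lsubst c 0 w = psub (w # ws @ r) 0 (tr b)" unfolding cb by (rule psub_lsubst)
    have e2': "bs (psub (ws@r) 0 (tr ?a2')) w" using e2 psub_shift_tr[OF len] by simp
    have we3: "wenv [] (compW W (compW (wS S) (WESBody WHole ?a2'))) (w # ws @ r)"
      using bs_app.prems(2) wenv_wS[OF ws Sans] e2' ans_shift[OF a2]
      by (auto simp: wenv_compW)
    obtain a3 where s4: "wstep\<^sup>*\<^sup>* (plugW W (plugS S (ES b ?a2'))) (plugW W (plugS S (ES a3 ?a2')))"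
      and a3: "ans a3" and e3: "bs (psub (w # ws @ r) 0 (tr a3)) v"
      using bs_app.IH(3)[OF t3 we3] by auto
    let ?a = "plugS (?a2' # S) a3"
    have "wstep\<^sup>*\<^sup>* (plugW W p) (plugW W ?a)"
      using s1 s2 s3 s4 App by (auto intro: rtranclp_trans)
    moreover have "ans ?a" using a3 Sans ans_shift[OF a2] by (auto simp: ans_plugS_iff)
    moreover have "bs (psub r 0 (tr ?a)) v" unfolding ev_plugS
      using ws e2' e3 by (intro exI[of _ "w#ws"]) auto
    ultimately show ?thesis by blast
  next
    case (ES q1 q2)
    have p0: "p0 = LLam (psub r (Suc 0) (tr q1))" and q0: "q0 = psub r 0 (tr q2)" using bs_app.prems(1) ES by auto
    have c: "c = psub r (Suc 0) (tr q1)" using bs_app.hyps(1) p0 by simp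
    have we2: "wenv [] (compW W (WESArg q1 WHole)) r" using bs_app.prems(2) by (auto simp: wenv_compW)
    obtain a2 where s2: "wstep\<^sup>*\<^sup>* (plugW W (ES q1 q2)) (plugW W (ES q1 a2))"
      and a2: "ans a2" and e2: "bs (psub r 0 (tr a2)) w"
      using bs_app.IH(2)[OF q0 we2] by auto
    have t3: "lsubst c 0 w = psub (w # r) 0 (tr q1)" unfolding c by (rule psub_lsubst)
    have we3: "wenv [] (compW W (WESBody WHole a2)) (w # r)"
      using bs_app.prems(2) e2 a2 by (auto simp: wenv_compW)
    obtain a3 where s4: "wstep\<^sup>*\<^sup>* (plugW W (ES q1 a2)) (plugW W (ES a3 a2))"
      and a3: "ans a3" and e3: "bs (psub (w # r) 0 (tr a3)) v"
      using bs_app.IH(3)[OF t3 we3] by auto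
    have "wstep\<^sup>*\<^sup>* (plugW W p) (plugW W (ES a3 a2))"
      using s2 s4 ES by (auto intro: rtranclp_trans)
    moreover have "ans (ES a3 a2)" using a3 a2 by simp
    moreover have "bs (psub r 0 (tr (ES a3 a2))) v" unfolding ev_ES using e2 e3 by blast
    ultimately show ?thesis by blast
  qed
qed

lemma bs_wnorm: "bs (tr s) v \<Longrightarrow> wnorm s"
proof -
  assume "bs (tr s) v"
  then obtain a where "wstep\<^sup>*\<^sup>* s a" "ans a"
    using claimC[of "tr s" v "[]" s WHole] by auto
  moreover obtain n where "wstep\<^sup>*\<^sup>* a n" "normal n" using ans_wnorm[OF \<open>ans a\<close>] by blast
  ultimately show ?thesis unfolding wnorm_def by (blast intro: rtranclp_trans)
qed


lemma lshift_bnd: "lfvs t \<subseteq> {..<n} \<Longrightarrow> lfvs (lshift d c t) \<subseteq> {..<n+d}"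
proof (induction t arbitrary: n c)
  case (LLam t)
  then have "lfvs (lshift d (Suc c) t) \<subseteq> {..<Suc n + d}" using LLam.IH[of "Suc n" "Suc c"] by simp
  then show ?case by simp
qed auto

lemma lsubst_bnd: "lfvs t \<subseteq> {..<Suc n} \<Longrightarrow> lfvs s \<subseteq> {..<n - k} \<Longrightarrow> k \<le> n \<Longrightarrow> lfvs (lsubst t k s) \<subseteq> {..<n}"
proof (induction t arbitrary: n k)
  case (LVar i)
  then show ?case using lshift_bnd[OF LVar.prems(2), of k 0] by auto
next
  case (LLam t)
  then show ?case using LLam.IH[of "Suc n" "Suc k"] by simp
qed auto

lemma bvstep_bnd: "bvstep t t' \<Longrightarrow> lfvs t \<subseteq> {..<n} \<Longrightarrow> lfvs t' \<subseteq> {..<n}"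
proof (induction arbitrary: n rule: bvstep.induct)
  case (beta t v)
  then show ?case using lsubst_bnd[of t n "LLam v" 0] by simp
qed auto

lemma closed_normal_lam: "lfvs t = {} \<Longrightarrow> \<not> (\<exists>t'. bvstep t t') \<Longrightarrow> \<exists>b. t = LLam b"
proof (induction t)
  case (LApp p q)
  have "\<not> (\<exists>t'. bvstep p t')" using LApp.prems(2) bvstep.appL by blast
  moreover have "\<not> (\<exists>t'. bvstep q t')" using LApp.prems(2) bvstep.appR by blast
  ultimately obtain b c where "p = LLam b" "q = LLam c" using LApp by auto
  then show ?case using LApp.prems(2) bvstep.beta by blast
qed auto

lemma bs_steps: "bs t v \<Longrightarrow> bvstep\<^sup>*\<^sup>* t v"
proof (induction rule: bs.induct)
  case (bs_lam t) then show ?case by simp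
next
  case (bs_app p c q w v)
  obtain d where wd: "w = LLam d" using bs_val[OF bs_app.hyps(2)] by blast
  have "bvstep\<^sup>*\<^sup>* (LApp p q) (LApp (LLam c) q)" using bs_app.IH(1)
    by (induction rule: rtranclp_induct) (auto intro: bvstep.appL rtranclp.rtrancl_into_rtrancl)
  moreover have "bvstep\<^sup>*\<^sup>* (LApp (LLam c) q) (LApp (LLam c) w)" using bs_app.IH(2)
    by (induction rule: rtranclp_induct) (auto intro: bvstep.appR rtranclp.rtrancl_into_rtrancl)
  moreover have "bvstep (LApp (LLam c) w) (lsubst c 0 w)" using wd by (auto intro: bvstep.beta)
  ultimately show ?case using bs_app.IH(3) by (meson rtranclp.rtrancl_into_rtrancl rtranclp_trans)
qed

lemma bv_back: "bvstep t t' \<Longrightarrow> bs t' v \<Longrightarrow> bs t v"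
proof (induction arbitrary: v rule: bvstep.induct)
  case (beta t v')
  then show ?case by (auto intro: bs.intros)
next
  case (appL t t' u)
  then show ?case by (auto simp: bs_LApp_iff)
next
  case (appR t t' u)
  then show ?case by (auto simp: bs_LApp_iff)
qed

lemma bvnorm_iff: "lclosed t \<Longrightarrow> bvnorm t \<longleftrightarrow> (\<exists>v. bs t v)"
proof
  assume c: "lclosed t" and "bvnorm t"
  then obtain n where sn: "bvstep\<^sup>*\<^sup>* t n" and nn: "\<not> (\<exists>n'. bvstep n n')" unfolding bvnorm_def by blast
  have "lfvs n \<subseteq> {..<0}" using sn c
    by (induction rule: rtranclp_induct) (auto simp: lclosed_def dest: bvstep_bnd)
  then have "lfvs n = {}" by auto
  then obtain b where "n = LLam b" using closed_normal_lam nn by blast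
  then have "bs n n" by (auto intro: bs.intros)
  with sn have "bs t n"
    by (induction rule: converse_rtranclp_induct) (auto intro: bv_back)
  then show "\<exists>v. bs t v" by blast
next
  assume "\<exists>v. bs t v"
  then obtain v where v: "bs t v" by blast
  then obtain b where "v = LLam b" using bs_val by blast
  then have "\<not> (\<exists>n'. bvstep v n')" by (auto elim: bvstep.cases)
  then show "bvnorm t" unfolding bvnorm_def using bs_steps[OF v] by blast
qed

lemma lfvs_tr: "lfvs (tr s) = fvs s"
  by (induction s) auto

lemma wnorm_iff: "closed s \<Longrightarrow> wnorm s \<longleftrightarrow> bvnorm (tr s)"
proof -
  assume c: "closed s"
  then have lc: "lclosed (tr s)" by (simp add: closed_def lclosed_def lfvs_tr)
  show ?thesis using wnorm_bs[OF c] bs_wnorm bvnorm_iff[OF lc] by blast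
qed

fun trC :: "ctx \<Rightarrow> lctx" where
  "trC CHole = LHole"
| "trC (CLam C) = LCLam (trC C)"
| "trC (CAppL C u) = LCAppL (trC C) (tr u)"
| "trC (CAppR u C) = LCAppR (tr u) (trC C)"
| "trC (CESBody C u) = LCAppL (LCLam (trC C)) (tr u)"
| "trC (CESArg u C) = LCAppR (LLam (tr u)) (trC C)"

fun embC :: "lctx \<Rightarrow> ctx" where
  "embC LHole = CHole"
| "embC (LCLam C) = CLam (embC C)"
| "embC (LCAppL C u) = CAppL (embC C) (emb u)"
| "embC (LCAppR u C) = CAppR (emb u) (embC C)"

lemma tr_plug: "tr (plug C s) = lplug (trC C) (tr s)"
  by (induction C) auto

lemma plug_embC: "plug (embC C) (emb t) = emb (lplug C t)"
  by (induction C) auto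

lemma tr_emb[simp]: "tr (emb t) = t"
  by (induction t) auto

lemma closed_tr: "closed s \<longleftrightarrow> lclosed (tr s)"
  by (simp add: closed_def lclosed_def lfvs_tr)

theorem theorem7p6:
  fixes t u :: lterm
  shows "equiv_S (emb t) (emb u) \<longleftrightarrow> equiv_V t u"
proof
  assume S: "equiv_S (emb t) (emb u)"
  show "equiv_V t u" unfolding equiv_V_def
  proof (intro allI impI)
    fix C assume c: "lclosed (lplug C t) \<and> lclosed (lplug C u)"
    have ct: "closed (plug (embC C) (emb t))" and cu: "closed (plug (embC C) (emb u))"
      using c by (simp_all add: plug_embC closed_tr)
    have "wnorm (plug (embC C) (emb t)) \<longleftrightarrow> wnorm (plug (embC C) (emb u))"
      using S ct cu unfolding equiv_S_def by blast
    then show "bvnorm (lplug C t) \<longleftrightarrow> bvnorm (lplug C u)"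
      using wnorm_iff[OF ct] wnorm_iff[OF cu] by (simp add: plug_embC)
  qed
next
  assume V: "equiv_V t u"
  show "equiv_S (emb t) (emb u)" unfolding equiv_S_def
  proof (intro allI impI)
    fix C assume c: "closed (plug C (emb t)) \<and> closed (plug C (emb u))"
    then have ct: "closed (plug C (emb t))" and cu: "closed (plug C (emb u))" by auto
    have "lclosed (lplug (trC C) t)" "lclosed (lplug (trC C) u)"
      using ct cu by (simp_all add: closed_tr tr_plug)
    then have "bvnorm (lplug (trC C) t) \<longleftrightarrow> bvnorm (lplug (trC C) u)"
      using V unfolding equiv_V_def by blast
    then show "wnorm (plug C (emb t)) \<longleftrightarrow> wnorm (plug C (emb u))"
      using wnorm_iff[OF ct] wnorm_iff[OF cu] by (simp add: tr_plug)
  qed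
qed

end
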